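(* Let $A\in\mathbb{C}^{m\times n}$ have rank $r$ and $B\in\mathbb{C}^{m\times n}$ have rank $s$, with singular value decompositions $$A=U\begin{pmatrix}\Sigma_{1}&0\\0&0\end{pmatrix}V^{\ast}=U_{1}\Sigma_{1}V_{1}^{\ast},\qquad B=\widetilde{U}\begin{pmatrix}\widetilde{\Sigma}_{1}&0\\0&0\end{pmatrix}\widetilde{V}^{\ast}=\widetilde{U}_{1}\widetilde{\Sigma}_{1}\widetilde{V}_{1}^{\ast},$$ where $U=(U_{1},U_{2})$ and $\widetilde{U}=(\widetilde{U}_{1},\widetilde{U}_{2})$ are $m\times m$ unitary, $V=(V_{1},V_{2})$ and $\widetilde{V}=(\widetilde{V}_{1},\widetilde{V}_{2})$ are $n\times n$ unitary, $U_{1}\in\mathbb{C}^{m\times r}$, $V_{1}\in\mathbb{C}^{n\times r}$, $\widetilde{U}_{1}\in\mathbb{C}^{m\times s}$, $\widetilde{V}_{1}\in\mathbb{C}^{n\times s}$, $\Sigma_{1}=\operatorname{diag}(\sigma_{1},\ldots,\sigma_{r})$ with $\sigma_{1}\geq\cdots\geq\sigma_{r}>0$, and $\widetilde{\Sigma}_{1}=\operatorname{diag}(\widetilde{\sigma}_{1},\ldots,\widetilde{\sigma}_{s})$ with $\widetilde{\sigma}_{1}\geq\cdots\geq\widetilde{\sigma}_{s}>0$. Let $E=B-A$. Then $$\|B^{\dagger}-A^{\dagger}\|_{F}^{2}=\|\widetilde{\Sigma}_{1}^{-1}\widetilde{U}_{1}^{\ast}U_{2}\|_{F}^{2}+\|\widetilde{V}_{2}^{\ast}V_{1}\Sigma_{1}^{-1}\|_{F}^{2}+\|B^{\dagger}EA^{\dagger}\|_{F}^{2},$$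 $$\|B^{\dagger}-A^{\dagger}\|_{F}^{2}=\|\widetilde{U}_{2}^{\ast}U_{1}\Sigma_{1}^{-1}\|_{F}^{2}+\|\widetilde{\Sigma}_{1}^{-1}\widetilde{V}_{1}^{\ast}V_{2}\|_{F}^{2}+\|A^{\dagger}EB^{\dagger}\|_{F}^{2}.$$
   Context: $M^{\dagger}$ denotes the Moore–Penrose inverse of $M$, $M^{\ast}$ the conjugate transpose, and $\|\cdot\|_{F}$ the Frobenius norm. *)

theory Defs
  imports "Jordan_Normal_Form.Schur_Decomposition" "Jordan_Normal_Form.DL_Rank"
begin

definition unitary_mat :: "complex mat \<Rightarrow> bool" where
  "unitary_mat U \<longleftrightarrow> U \<in> carrier_mat (dim_row U) (dim_row U) \<and>
     mat_adjoint U * U = 1\<^sub>m (dim_row U) \<and> U * mat_adjoint U = 1\<^sub>m (dim_row U)"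

definition col_block :: "'a mat \<Rightarrow> nat \<Rightarrow> nat \<Rightarrow> 'a mat" where
  "col_block M k l = mat (dim_row M) l (\<lambda>(i,j). M $$ (i, k + j))"

definition mp_inverse :: "complex mat \<Rightarrow> complex mat" where
  "mp_inverse A = (THE X. X \<in> carrier_mat (dim_col A) (dim_row A) \<and>
      A * X * A = A \<and> X * A * X = X \<and>
      mat_adjoint (A * X) = A * X \<and> mat_adjoint (X * A) = X * A)"

definition mat_inv :: "complex mat \<Rightarrow> complex mat" where
  "mat_inv M = (THE X. X \<in> carrier_mat (dim_row M) (dim_row M) \<and>
      M * X = 1\<^sub>m (dim_row M) \<and> X * M = 1\<^sub>m (dim_row M))"

definition frob_norm :: "complex mat \<Rightarrow> real" where
  "frob_norm M = sqrt (\<Sum>i<dim_row M. \<Sum>j<dim_col M. (cmod (M $$ (i,j)))\<^sup>2)"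

end

theory Submission
  imports Defs
begin

lemma adj_dims[simp]: "dim_row (mat_adjoint M) = dim_col M" "dim_col (mat_adjoint M) = dim_row M"
  by (auto simp: mat_adjoint_def)

lemma adj_index[simp]: "i < dim_col M \<Longrightarrow> j < dim_row M \<Longrightarrow> mat_adjoint M $$ (i,j) = cnj (M $$ (j,i))"
  by (simp add: mat_adjoint_def mat_of_rows_index)

lemma adj_carrier[simp]: "M \<in> carrier_mat a b \<Longrightarrow> mat_adjoint M \<in> carrier_mat b a"
  unfolding carrier_mat_def by simp

lemma adj_adj[simp]: "mat_adjoint (mat_adjoint (M::complex mat)) = M"
  by (rule eq_matI) auto

lemma mult_entry: "A \<in> carrier_mat a k \<Longrightarrow> B \<in> carrier_mat k b \<Longrightarrow> i < a \<Longrightarrow> j < b \<Longrightarrow>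
  (A * B) $$ (i,j) = (\<Sum>l<k. A $$ (i,l) * B $$ (l,j))"
  unfolding carrier_mat_def by (auto simp: scalar_prod_def atLeast0LessThan intro!: sum.cong)

lemma adj_mult: assumes "A \<in> carrier_mat a k" "B \<in> carrier_mat k b"
  shows "mat_adjoint (A * B) = mat_adjoint B * (mat_adjoint (A::complex mat))"
proof (rule eq_matI)
  fix i j assume ij: "i < dim_row (mat_adjoint B * mat_adjoint A)" "j < dim_col (mat_adjoint B * mat_adjoint A)"
  have i: "i < b" and j: "j < a" using assms ij by auto
  have "(mat_adjoint B * mat_adjoint A) $$ (i,j) = (\<Sum>l<k. mat_adjoint B $$ (i,l) * mat_adjoint A $$ (l,j))"
    by (rule mult_entry[OF adj_carrier[OF assms(2)] adj_carrier[OF assms(1)] i j])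
  also have "\<dots> = (\<Sum>l<k. cnj (A $$ (j,l) * B $$ (l,i)))"
    proof (rule sum.cong[OF refl])
    fix x assume "x \<in> {..<k}"
    hence x: "x < k" by simp
    have "mat_adjoint B $$ (i,x) = cnj (B $$ (x,i))" using assms i x by (intro adj_index) auto
    moreover have "mat_adjoint A $$ (x,j) = cnj (A $$ (j,x))" using assms j x by (intro adj_index) auto
    ultimately show "mat_adjoint B $$ (i,x) * mat_adjoint A $$ (x,j) = cnj (A $$ (j,x) * B $$ (x,i))"
      by (simp only: complex_cnj_mult mult.commute)
  qed
  also have "\<dots> = cnj ((A * B) $$ (j,i))"
    by (simp add: mult_entry[OF assms j i])
  also have "\<dots> = mat_adjoint (A * B) $$ (i,j)" using assms i j by simp
  finally show "mat_adjoint (A * B) $$ (i, j) = (mat_adjoint B * mat_adjoint A) $$ (i, j)" by (rule sym)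
next
  show "dim_row (mat_adjoint (A * B)) = dim_row (mat_adjoint B * mat_adjoint A)" by simp
next
  show "dim_col (mat_adjoint (A * B)) = dim_col (mat_adjoint B * mat_adjoint A)" by simp
qed


lemma sum_split_add: "(\<Sum>p<(r::nat)+d. f p) = (\<Sum>p<r. f p) + (\<Sum>p<d. (f (r+p)::'a::comm_monoid_add))"
  by (induct d) (simp_all add: add.assoc)

lemma sum_split_le: "(r::nat) \<le> m \<Longrightarrow> (\<Sum>p<m. f p) = (\<Sum>p<r. f p) + (\<Sum>p<m-r. (f (r+p)::'a::comm_monoid_add))"
  using sum_split_add[where r=r and d="m-r" and f=f] by simp

definition ip :: "complex mat \<Rightarrow> complex mat \<Rightarrow> complex" where
  "ip Y Z = (\<Sum>i<dim_row Y. \<Sum>j<dim_col Y. Y $$ (i,j) * cnj (Z $$ (i,j)))"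

lemma fro_sq: "(frob_norm M)\<^sup>2 = Re (ip M M)"
proof -
  have nn: "0 \<le> (\<Sum>i<dim_row M. \<Sum>j<dim_col M. (cmod (M $$ (i,j)))\<^sup>2)"
    by (intro sum_nonneg) simp
  have "(frob_norm M)\<^sup>2 = (\<Sum>i<dim_row M. \<Sum>j<dim_col M. (cmod (M $$ (i,j)))\<^sup>2)"
    unfolding frob_norm_def using nn by simp
  also have "\<dots> = Re (ip M M)"
    unfolding ip_def Re_sum
    by (intro sum.cong refl) (simp add: complex_mult_cnj cmod_def power2_eq_square)
  finally show ?thesis .
qed

lemma ip_cnj: "dim_row Z = dim_row Y \<Longrightarrow> dim_col Z = dim_col Y \<Longrightarrow> ip Z Y = cnj (ip Y Z)"
  unfolding ip_def by (simp add: mult.commute)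

lemma ip_zero_right: "Z \<in> carrier_mat a b \<Longrightarrow> ip Y Z = 0" if "Z = 0\<^sub>m a b" "Y \<in> carrier_mat a b"
  using that unfolding ip_def carrier_mat_def by simp

lemma ip_zero_left: "ip (0\<^sub>m a b) Z = 0"
  unfolding ip_def by simp

lemma ip_left_mult:
  assumes P: "P \<in> carrier_mat k a" and Z: "Z \<in> carrier_mat a b" and Y: "Y \<in> carrier_mat k b"
  shows "ip Y (P * Z) = ip (mat_adjoint P * Y) Z"
proof -
  have "ip Y (P * Z) = (\<Sum>i<k. \<Sum>j<b. \<Sum>l<a. Y $$ (i,j) * cnj (P $$ (i,l)) * cnj (Z $$ (l,j)))"
    unfolding ip_def carrier_matD[OF Y]
    by (intro sum.cong refl) (simp add: mult_entry[OF P Z] sum_distrib_left mult.assoc)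
  also have "\<dots> = (\<Sum>i<k. \<Sum>l<a. \<Sum>j<b. Y $$ (i,j) * cnj (P $$ (i,l)) * cnj (Z $$ (l,j)))"
    by (intro sum.cong refl sum.swap)
  also have "\<dots> = (\<Sum>l<a. \<Sum>i<k. \<Sum>j<b. Y $$ (i,j) * cnj (P $$ (i,l)) * cnj (Z $$ (l,j)))"
    by (rule sum.swap)
  also have "\<dots> = (\<Sum>l<a. \<Sum>j<b. \<Sum>i<k. Y $$ (i,j) * cnj (P $$ (i,l)) * cnj (Z $$ (l,j)))"
    by (intro sum.cong refl sum.swap)
  also have "\<dots> = ip (mat_adjoint P * Y) Z"
  proof -
    have c: "mat_adjoint P \<in> carrier_mat a k" using P by simp
    have d: "mat_adjoint P * Y \<in> carrier_mat a b" using c Y by simp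
    show ?thesis unfolding ip_def using d
      apply (simp only: carrier_matD)
      apply (intro sum.cong refl)
      apply (simp add: mult_entry[OF c Y] sum_distrib_right)
      apply (intro sum.cong refl)
      using P by (simp add: mult_ac)
  qed
  finally show ?thesis .
qed


lemma ip_right_mult:
  assumes Y: "Y \<in> carrier_mat a k" and Q: "Q \<in> carrier_mat k b" and Z: "Z \<in> carrier_mat a b"
  shows "ip (Y * Q) Z = ip Y (Z * mat_adjoint Q)"
proof -
  have c: "mat_adjoint Q \<in> carrier_mat b k" using Q by simp
  have d: "Y * Q \<in> carrier_mat a b" using Y Q by simp
  have "ip (Y * Q) Z = (\<Sum>i<a. \<Sum>j<b. \<Sum>l<k. Y $$ (i,l) * Q $$ (l,j) * cnj (Z $$ (i,j)))"
    unfolding ip_def carrier_matD[OF d]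
    by (intro sum.cong refl) (simp add: mult_entry[OF Y Q] sum_distrib_right)
  also have "\<dots> = (\<Sum>i<a. \<Sum>l<k. \<Sum>j<b. Y $$ (i,l) * Q $$ (l,j) * cnj (Z $$ (i,j)))"
    by (intro sum.cong refl sum.swap)
  also have "\<dots> = ip Y (Z * mat_adjoint Q)"
    unfolding ip_def carrier_matD[OF Y]
    apply (intro sum.cong refl)
    apply (simp add: mult_entry[OF Z c] sum_distrib_left)
    apply (intro sum.cong refl)
    using Q by (simp add: mult_ac)
  finally show ?thesis .
qed

lemma ip_adj: "ip (mat_adjoint M) (mat_adjoint M) = ip M M"
proof -
  have "ip (mat_adjoint M) (mat_adjoint M) = (\<Sum>i<dim_col M. \<Sum>j<dim_row M. M $$ (j,i) * cnj (M $$ (j,i)))"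
    unfolding ip_def adj_dims by (intro sum.cong refl) (simp add: mult.commute)
  also have "\<dots> = ip M M" unfolding ip_def by (rule sum.swap)
  finally show ?thesis .
qed

lemma ip_minus_left: assumes "Y \<in> carrier_mat a b" "Z \<in> carrier_mat a b"
  shows "ip (Y - Z) W = ip Y W - ip Z W"
  unfolding ip_def using assms
  by (simp add: carrier_matD sum_subtractf[symmetric] left_diff_distrib)

lemma ip_minus_right: assumes "Y \<in> carrier_mat a b" "Z \<in> carrier_mat a b" "W \<in> carrier_mat a b"
  shows "ip W (Y - Z) = ip W Y - ip W Z"
  unfolding ip_def using assms
  by (simp add: carrier_matD sum_subtractf[symmetric] right_diff_distrib)

lemma pyth3:
  assumes Y1: "Y1 \<in> carrier_mat a b" and Y2: "Y2 \<in> carrier_mat a b" and T: "T \<in> carrier_mat a b"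
    and o1: "ip Y1 Y2 = 0" and o2: "ip Y1 T = 0" and o3: "ip Y2 T = 0"
  shows "ip (Y1 - Y2 - T) (Y1 - Y2 - T) = ip Y1 Y1 + ip Y2 Y2 + ip T T"
proof -
  have D: "Y1 - Y2 \<in> carrier_mat a b" using Y2 by (rule minus_carrier_mat)
  have r1: "ip Y2 Y1 = 0" using ip_cnj[of Y2 Y1] o1 Y1 Y2 by (simp add: carrier_matD)
  have r2: "ip T Y1 = 0" using ip_cnj[of T Y1] o2 Y1 T by (simp add: carrier_matD)
  have r3: "ip T Y2 = 0" using ip_cnj[of T Y2] o3 Y2 T by (simp add: carrier_matD)
  show ?thesis
    using ip_minus_left[OF D T] ip_minus_right[OF D T D] ip_minus_right[OF D T T]
      ip_minus_left[OF Y1 Y2] ip_minus_right[OF Y1 Y2 Y1] ip_minus_right[OF Y1 Y2 Y2]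
      ip_minus_right[OF Y1 Y2 T]
      o1 o2 o3 r1 r2 r3 by simp
qed

lemma adj_minus: assumes "(Y::complex mat) \<in> carrier_mat a b" "Z \<in> carrier_mat a b"
  shows "mat_adjoint (Y - Z) = mat_adjoint Y - mat_adjoint Z"
  using carrier_matD[OF assms(1)] carrier_matD[OF assms(2)] by (intro eq_matI) simp_all

lemma adj_one: "mat_adjoint (1\<^sub>m n :: complex mat) = 1\<^sub>m n"
  by (rule eq_matI) simp_all

lemma adj_zero: "mat_adjoint (0\<^sub>m a b :: complex mat) = 0\<^sub>m b a"
  by (rule eq_matI) simp_all


definition penrose :: "complex mat \<Rightarrow> complex mat \<Rightarrow> bool" where
  "penrose A X \<longleftrightarrow> X \<in> carrier_mat (dim_col A) (dim_row A) \<and>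
      A * X * A = A \<and> X * A * X = X \<and>
      mat_adjoint (A * X) = A * X \<and> mat_adjoint (X * A) = X * A"

lemma penrose_unique:
  assumes A: "A \<in> carrier_mat a b" and pX: "penrose A X" and pY: "penrose A Y"
  shows "X = Y"
proof -
  have X: "X \<in> carrier_mat b a" and X1: "A * X * A = A" and X2: "X * A * X = X"
    and X3: "mat_adjoint (A * X) = A * X" and X4: "mat_adjoint (X * A) = X * A"
    using pX A unfolding penrose_def by (auto simp: carrier_matD)
  have Y: "Y \<in> carrier_mat b a" and Y1: "A * Y * A = A" and Y2: "Y * A * Y = Y"
    and Y3: "mat_adjoint (A * Y) = A * Y" and Y4: "mat_adjoint (Y * A) = Y * A"
    using pY A unfolding penrose_def by (auto simp: carrier_matD)
  have aA: "mat_adjoint A \<in> carrier_mat b a" using A by simp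
  have aX: "mat_adjoint X \<in> carrier_mat a b" using X by simp
  have AX: "A * X \<in> carrier_mat a a" using A X by simp
  have AY: "A * Y \<in> carrier_mat a a" using A Y by simp
  have XA: "X * A \<in> carrier_mat b b" using A X by simp
  have YA: "Y * A \<in> carrier_mat b b" using A Y by simp
  have adjA1: "mat_adjoint A = mat_adjoint A * (A * Y)"
  proof -
    have "mat_adjoint A = mat_adjoint (A * Y * A)" using Y1 by simp
    also have "\<dots> = mat_adjoint A * mat_adjoint (A * Y)" by (rule adj_mult[OF AY A])
    finally show ?thesis using Y3 by simp
  qed
  have adjA2: "mat_adjoint A = (Y * A) * mat_adjoint A"
  proof -
    have "mat_adjoint A = mat_adjoint (A * (Y * A))" using Y1 assoc_mult_mat[OF A Y A] by simp
    also have "\<dots> = mat_adjoint (Y * A) * mat_adjoint A" by (rule adj_mult[OF A YA])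
    finally show ?thesis using Y4 by simp
  qed
  have e1: "A * X = A * Y"
  proof -
    have "A * X = mat_adjoint X * mat_adjoint A" using X3 adj_mult[OF A X] by simp
    also have "\<dots> = mat_adjoint X * (mat_adjoint A * (A * Y))" using adjA1 by simp
    also have "\<dots> = (mat_adjoint X * mat_adjoint A) * (A * Y)"
      by (rule assoc_mult_mat[OF aX aA AY, symmetric])
    also have "mat_adjoint X * mat_adjoint A = A * X" using X3 adj_mult[OF A X] by simp
    also have "(A * X) * (A * Y) = ((A * X) * A) * Y"
      using assoc_mult_mat[OF AX A Y] by simp
    also have "\<dots> = A * Y" using X1 by simp
    finally show ?thesis .
  qed
  have e2: "X * A = Y * A"
  proof -
    have "X * A = mat_adjoint A * mat_adjoint X" using X4 adj_mult[OF X A] by simp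
    also have "\<dots> = ((Y * A) * mat_adjoint A) * mat_adjoint X" using adjA2 by simp
    also have "\<dots> = (Y * A) * (mat_adjoint A * mat_adjoint X)"
      by (rule assoc_mult_mat[OF YA aA aX])
    also have "mat_adjoint A * mat_adjoint X = X * A" using X4 adj_mult[OF X A] by simp
    also have "(Y * A) * (X * A) = Y * (A * X * A)"
      using assoc_mult_mat[OF Y A XA] assoc_mult_mat[OF A X A] by simp
    also have "\<dots> = Y * A" using X1 by simp
    finally show ?thesis .
  qed
  have "X = (X * A) * X" using X2 by simp
  also have "\<dots> = (Y * A) * X" using e2 by simp
  also have "\<dots> = Y * (A * X)" by (rule assoc_mult_mat[OF Y A X])
  also have "\<dots> = Y * (A * Y)" using e1 by simp
  also have "\<dots> = Y * A * Y" by (rule assoc_mult_mat[OF Y A Y, symmetric])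
  also have "\<dots> = Y" by (rule Y2)
  finally show ?thesis .
qed

lemma mp_inverse_eq:
  assumes A: "A \<in> carrier_mat a b" and pX: "penrose A X"
  shows "mp_inverse A = X"
  unfolding mp_inverse_def
proof (rule the_equality)
  show "X \<in> carrier_mat (dim_col A) (dim_row A) \<and> A * X * A = A \<and> X * A * X = X \<and>
      mat_adjoint (A * X) = A * X \<and> mat_adjoint (X * A) = X * A"
    using pX unfolding penrose_def by simp
next
  fix Y assume "Y \<in> carrier_mat (dim_col A) (dim_row A) \<and> A * Y * A = A \<and> Y * A * Y = Y \<and>
      mat_adjoint (A * Y) = A * Y \<and> mat_adjoint (Y * A) = Y * A"
  hence "penrose A Y" unfolding penrose_def by simp
  thus "Y = X" using penrose_unique[OF A _ pX] by simp
qed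


lemma core:
  assumes A: "A \<in> carrier_mat m n" and B: "B \<in> carrier_mat m n"
    and pA: "penrose A XA" and pB: "penrose B XB"
  shows "ip (XB - XA) (XB - XA) =
     ip (XB * (1\<^sub>m m - A * XA)) (XB * (1\<^sub>m m - A * XA))
   + ip ((1\<^sub>m n - XB * B) * XA) ((1\<^sub>m n - XB * B) * XA)
   + ip (XB * (B - A) * XA) (XB * (B - A) * XA)"
proof -
  have XA: "XA \<in> carrier_mat n m" and A1: "A * XA * A = A" and A2: "XA * A * XA = XA"
    and A3: "mat_adjoint (A * XA) = A * XA" and A4: "mat_adjoint (XA * A) = XA * A"
    using pA A unfolding penrose_def by (auto simp: carrier_matD)
  have XB: "XB \<in> carrier_mat n m" and B1: "B * XB * B = B" and B2: "XB * B * XB = XB"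
    and B3: "mat_adjoint (B * XB) = B * XB" and B4: "mat_adjoint (XB * B) = XB * B"
    using pB B unfolding penrose_def by (auto simp: carrier_matD)
  define Q2 where "Q2 = 1\<^sub>m m - A * XA"
  define P2 where "P2 = 1\<^sub>m n - XB * B"
  define Y1 where "Y1 = XB * Q2"
  define Y2 where "Y2 = P2 * XA"
  define T where "T = XB * (B - A) * XA"
  have AXA: "A * XA \<in> carrier_mat m m" using A XA by simp
  have XBB: "XB * B \<in> carrier_mat n n" using B XB by simp
  have BA: "B - A \<in> carrier_mat m n" using A by (rule minus_carrier_mat)
  have Q2c: "Q2 \<in> carrier_mat m m" unfolding Q2_def using AXA by (rule minus_carrier_mat)
  have P2c: "P2 \<in> carrier_mat n n" unfolding P2_def using XBB by (rule minus_carrier_mat)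
  have Y1c: "Y1 \<in> carrier_mat n m" unfolding Y1_def using XB Q2c by simp
  have Y2c: "Y2 \<in> carrier_mat n m" unfolding Y2_def using XA P2c by simp
  have XBBA: "XB * (B - A) \<in> carrier_mat n n" using XB BA by simp
  have Tc: "T \<in> carrier_mat n m" unfolding T_def using XBBA XA by simp
  have hQ: "mat_adjoint Q2 = Q2" unfolding Q2_def
    using adj_minus[OF one_carrier_mat AXA] A3 adj_one by simp
  have hP: "mat_adjoint P2 = P2" unfolding P2_def
    using adj_minus[OF one_carrier_mat XBB] B4 adj_one by simp
  have P2XB: "P2 * XB = 0\<^sub>m n m"
  proof -
    have "P2 * XB = 1\<^sub>m n * XB - XB * B * XB"
      unfolding P2_def by (rule minus_mult_distrib_mat[OF one_carrier_mat XBB XB])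
    also have "\<dots> = XB - XB" using B2 XB by simp
    also have "\<dots> = 0\<^sub>m n m" using XB by simp
    finally show ?thesis .
  qed
  have XAQ2: "XA * Q2 = 0\<^sub>m n m"
  proof -
    have "XA * Q2 = XA * 1\<^sub>m m - XA * (A * XA)"
      unfolding Q2_def by (rule mult_minus_distrib_mat[OF XA one_carrier_mat AXA])
    also have "XA * (A * XA) = XA * A * XA" by (rule assoc_mult_mat[OF XA A XA, symmetric])
    also have "XA * 1\<^sub>m m - XA * A * XA = XA - XA" using A2 XA by simp
    also have "\<dots> = 0\<^sub>m n m" using XA by simp
    finally show ?thesis .
  qed
  have o1: "ip Y1 Y2 = 0"
  proof -
    have "ip Y1 Y2 = ip (mat_adjoint P2 * Y1) XA" unfolding Y2_def
      by (rule ip_left_mult[OF P2c XA Y1c])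
    also have "mat_adjoint P2 * Y1 = (P2 * XB) * Q2" unfolding hP Y1_def
      by (rule assoc_mult_mat[OF P2c XB Q2c, symmetric])
    also have "\<dots> = 0\<^sub>m n m" unfolding P2XB by (rule left_mult_zero_mat[OF Q2c])
    finally show ?thesis by (simp add: ip_zero_left)
  qed
  have o2: "ip Y1 T = 0"
  proof -
    have "ip Y1 T = ip XB (T * mat_adjoint Q2)" unfolding Y1_def
      by (rule ip_right_mult[OF XB Q2c Tc])
    also have "T * mat_adjoint Q2 = (XB * (B - A)) * (XA * Q2)" unfolding hQ T_def
      by (rule assoc_mult_mat[OF XBBA XA Q2c])
    also have "\<dots> = 0\<^sub>m n m" unfolding XAQ2 by (rule right_mult_zero_mat[OF XBBA])
    also have "ip XB (0\<^sub>m n m) = 0" unfolding ip_def using carrier_matD[OF XB] by simp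
    finally show ?thesis .
  qed
  have o3: "ip Y2 T = 0"
  proof -
    have "ip Y2 T = cnj (ip T Y2)" using Y2c Tc by (intro ip_cnj) (simp_all add: carrier_matD)
    also have "ip T Y2 = ip (mat_adjoint P2 * T) XA" unfolding Y2_def
      by (rule ip_left_mult[OF P2c XA Tc])
    also have "mat_adjoint P2 * T = ((P2 * XB) * (B - A)) * XA" unfolding hP T_def
      using assoc_mult_mat[OF P2c XBBA XA] assoc_mult_mat[OF P2c XB BA] by simp
    also have "\<dots> = 0\<^sub>m n m" unfolding P2XB
      using left_mult_zero_mat[OF BA, of n] left_mult_zero_mat[OF XA, of n] by simp
    finally show ?thesis by (simp add: ip_zero_left)
  qed
  have decomp: "XB - XA = Y1 - Y2 - T"
  proof -
    define K1 where "K1 = XB * (A * XA)"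
    define K2 where "K2 = XB * B * XA"
    have K1c: "K1 \<in> carrier_mat n m" unfolding K1_def using XB AXA by simp
    have K2c: "K2 \<in> carrier_mat n m" unfolding K2_def using XBB XA by simp
    have e1: "Y1 = XB - K1" unfolding Y1_def Q2_def K1_def
      using mult_minus_distrib_mat[OF XB one_carrier_mat AXA] XB by simp
    have e2: "Y2 = XA - K2" unfolding Y2_def P2_def K2_def
      using minus_mult_distrib_mat[OF one_carrier_mat XBB XA] XA by simp
    have e3: "T = K2 - K1" unfolding T_def K1_def K2_def
      using mult_minus_distrib_mat[OF XB B A] minus_mult_distrib_mat[OF _ _ XA, of "XB * B" n "XB * A"]
        assoc_mult_mat[OF XB A XA] XB B A by simp
    show ?thesis unfolding e1 e2 e3
      using carrier_matD[OF XB] carrier_matD[OF XA] carrier_matD[OF K1c] carrier_matD[OF K2c]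
      by (intro eq_matI) simp_all
  qed
  show ?thesis
    using pyth3[OF Y1c Y2c Tc o1 o2 o3] unfolding decomp Y1_def Y2_def T_def Q2_def P2_def .
qed


lemma cb_dims[simp]: "dim_row (col_block M k l) = dim_row M" "dim_col (col_block M k l) = l"
  unfolding col_block_def by simp_all

lemma cb_index[simp]: "i < dim_row M \<Longrightarrow> j < l \<Longrightarrow> col_block M k l $$ (i,j) = M $$ (i, k+j)"
  unfolding col_block_def by simp

lemma cb_carrier: "M \<in> carrier_mat m m' \<Longrightarrow> col_block M k l \<in> carrier_mat m l"
  unfolding carrier_mat_def by simp

lemma cb_orth:
  assumes U: "(U::complex mat) \<in> carrier_mat m m" and uu: "mat_adjoint U * U = 1\<^sub>m m" and kl: "k + l \<le> m"
  shows "mat_adjoint (col_block U k l) * col_block U k l = 1\<^sub>m l"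
proof (rule eq_matI)
  have C: "col_block U k l \<in> carrier_mat m l" by (rule cb_carrier[OF U])
  have aC: "mat_adjoint (col_block U k l) \<in> carrier_mat l m" using C by simp
  have aU: "mat_adjoint U \<in> carrier_mat m m" using U by simp
  fix i j assume "i < dim_row (1\<^sub>m l :: complex mat)" "j < dim_col (1\<^sub>m l :: complex mat)"
  hence i: "i < l" and j: "j < l" by simp_all
  have ki: "k + i < m" and kj: "k + j < m" using i j kl by simp_all
  have "(mat_adjoint (col_block U k l) * col_block U k l) $$ (i,j)
      = (\<Sum>p<m. mat_adjoint (col_block U k l) $$ (i,p) * col_block U k l $$ (p,j))"
    by (rule mult_entry[OF aC C i j])
  also have "\<dots> = (\<Sum>p<m. mat_adjoint U $$ (k+i,p) * U $$ (p,k+j))"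
  proof (intro sum.cong refl)
    fix p assume "p \<in> {..<m}"
    hence p: "p < m" by simp
    have "mat_adjoint (col_block U k l) $$ (i,p) = cnj (col_block U k l $$ (p,i))"
      using i p carrier_matD[OF U] by (intro adj_index) simp_all
    also have "\<dots> = cnj (U $$ (p,k+i))" using i p carrier_matD[OF U] by simp
    also have "\<dots> = mat_adjoint U $$ (k+i,p)" using ki p carrier_matD[OF U] by simp
    finally have e1: "mat_adjoint (col_block U k l) $$ (i,p) = mat_adjoint U $$ (k+i,p)" .
    have e2: "col_block U k l $$ (p,j) = U $$ (p,k+j)" using j p carrier_matD[OF U] by simp
    show "mat_adjoint (col_block U k l) $$ (i,p) * col_block U k l $$ (p,j) = mat_adjoint U $$ (k+i,p) * U $$ (p,k+j)"
      unfolding e1 e2 ..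
  qed
  also have "\<dots> = (mat_adjoint U * U) $$ (k+i,k+j)"
    by (rule mult_entry[OF aU U ki kj, symmetric])
  also have "\<dots> = 1\<^sub>m l $$ (i,j)" using uu ki kj i j by simp
  finally show "(mat_adjoint (col_block U k l) * col_block U k l) $$ (i,j) = 1\<^sub>m l $$ (i,j)" .
next
  show "dim_row (mat_adjoint (col_block U k l) * col_block U k l) = dim_row (1\<^sub>m l :: complex mat)" by simp
  show "dim_col (mat_adjoint (col_block U k l) * col_block U k l) = dim_col (1\<^sub>m l :: complex mat)" by simp
qed

lemma cb_split:
  assumes U: "(U::complex mat) \<in> carrier_mat m m" and uu: "U * mat_adjoint U = 1\<^sub>m m" and r: "r \<le> m"
  shows "1\<^sub>m m - col_block U 0 r * mat_adjoint (col_block U 0 r)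
       = col_block U r (m - r) * mat_adjoint (col_block U r (m - r))"
proof (rule eq_matI)
  have C1: "col_block U 0 r \<in> carrier_mat m r" by (rule cb_carrier[OF U])
  have aC1: "mat_adjoint (col_block U 0 r) \<in> carrier_mat r m" using C1 by simp
  have C2: "col_block U r (m-r) \<in> carrier_mat m (m-r)" by (rule cb_carrier[OF U])
  have aC2: "mat_adjoint (col_block U r (m-r)) \<in> carrier_mat (m-r) m" using C2 by simp
  have aU: "mat_adjoint U \<in> carrier_mat m m" using U by simp
  fix i j assume "i < dim_row (col_block U r (m - r) * mat_adjoint (col_block U r (m - r)))"
    "j < dim_col (col_block U r (m - r) * mat_adjoint (col_block U r (m - r)))"
  hence i: "i < m" and j: "j < m" using carrier_matD[OF U] by simp_all
  have "1\<^sub>m m $$ (i,j) = (U * mat_adjoint U) $$ (i,j)" using uu by simp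
  also have "\<dots> = (\<Sum>p<m. U $$ (i,p) * mat_adjoint U $$ (p,j))" by (rule mult_entry[OF U aU i j])
  also have "\<dots> = (\<Sum>p<r. U $$ (i,p) * mat_adjoint U $$ (p,j))
      + (\<Sum>p<m-r. U $$ (i,r+p) * mat_adjoint U $$ (r+p,j))" by (rule sum_split_le[OF r])
  also have "(\<Sum>p<r. U $$ (i,p) * mat_adjoint U $$ (p,j))
      = (col_block U 0 r * mat_adjoint (col_block U 0 r)) $$ (i,j)"
    unfolding mult_entry[OF C1 aC1 i j] using carrier_matD[OF U] i j r
    by (intro sum.cong refl) simp
  also have "(\<Sum>p<m-r. U $$ (i,r+p) * mat_adjoint U $$ (r+p,j))
      = (col_block U r (m-r) * mat_adjoint (col_block U r (m-r))) $$ (i,j)"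
    unfolding mult_entry[OF C2 aC2 i j] using carrier_matD[OF U] i j r
    by (intro sum.cong refl) simp
  finally show "(1\<^sub>m m - col_block U 0 r * mat_adjoint (col_block U 0 r)) $$ (i, j) =
         (col_block U r (m - r) * mat_adjoint (col_block U r (m - r))) $$ (i, j)"
    using i j carrier_matD[OF U] by simp
next
  show "dim_row (1\<^sub>m m - col_block U 0 r * mat_adjoint (col_block U 0 r)) =
    dim_row (col_block U r (m - r) * mat_adjoint (col_block U r (m - r)))" using carrier_matD[OF U] by simp
  show "dim_col (1\<^sub>m m - col_block U 0 r * mat_adjoint (col_block U 0 r)) =
    dim_col (col_block U r (m - r) * mat_adjoint (col_block U r (m - r)))" using carrier_matD[OF U] by simp
qed


lemma assoc4:
  assumes "P \<in> carrier_mat a b" "Q \<in> carrier_mat b c" "R \<in> carrier_mat c d" "T \<in> carrier_mat d e"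
  shows "(P * Q) * (R * T) = P * ((Q * R) * (T::complex mat))"
proof -
  have "(P * Q) * (R * T) = P * (Q * (R * T))" using assms by (intro assoc_mult_mat) auto
  also have "Q * (R * T) = (Q * R) * T" using assms by (intro assoc_mult_mat[symmetric]) auto
  finally show ?thesis .
qed

lemma mat_inv_diag:
  assumes d: "\<And>i. i < r \<Longrightarrow> d i \<noteq> 0"
  shows "mat_inv (mat_diag r (\<lambda>i. complex_of_real (d i))) = mat_diag r (\<lambda>i. complex_of_real (1 / d i))"
    and "mat_diag r (\<lambda>i. complex_of_real (d i)) * mat_diag r (\<lambda>i. complex_of_real (1 / d i)) = 1\<^sub>m r"
    and "mat_diag r (\<lambda>i. complex_of_real (1 / d i)) * mat_diag r (\<lambda>i. complex_of_real (d i)) = 1\<^sub>m r"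
proof -
  let ?S = "mat_diag r (\<lambda>i. complex_of_real (d i))"
  let ?D = "mat_diag r (\<lambda>i. complex_of_real (1 / d i))"
  have SD: "?S * ?D = 1\<^sub>m r"
    unfolding mat_diag_diag by (rule eq_matI) (simp_all add: mat_diag_def d)
  have DS: "?D * ?S = 1\<^sub>m r"
    unfolding mat_diag_diag by (rule eq_matI) (simp_all add: mat_diag_def d)
  show "?S * ?D = 1\<^sub>m r" by (rule SD)
  show "?D * ?S = 1\<^sub>m r" by (rule DS)
  have Sc: "?S \<in> carrier_mat r r" by simp
  have Dc: "?D \<in> carrier_mat r r" by simp
  have dS: "dim_row ?S = r" using carrier_matD[OF Sc] by simp
  show "mat_inv ?S = ?D"
    unfolding mat_inv_def dS
  proof (rule the_equality)
    show "?D \<in> carrier_mat r r \<and> ?S * ?D = 1\<^sub>m r \<and> ?D * ?S = 1\<^sub>m r"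
      using SD DS Dc by blast
  next
    fix X assume "X \<in> carrier_mat r r \<and> ?S * X = 1\<^sub>m r \<and> X * ?S = 1\<^sub>m r"
    hence X: "X \<in> carrier_mat r r" and SX: "?S * X = 1\<^sub>m r" by blast+
    have "X = 1\<^sub>m r * X" using X by simp
    also have "\<dots> = (?D * ?S) * X" using DS by simp
    also have "\<dots> = ?D * (?S * X)" by (rule assoc_mult_mat[OF Dc Sc X])
    also have "\<dots> = ?D * 1\<^sub>m r" using SX by simp
    also have "\<dots> = ?D" by (rule right_mult_one_mat[OF Dc])
    finally show "X = ?D" .
  qed
qed

lemma svd_pen:
  assumes U1: "U1 \<in> carrier_mat m r" and V1: "V1 \<in> carrier_mat n r"
    and S: "S \<in> carrier_mat r r" and Si: "Si \<in> carrier_mat r r"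
    and uu: "mat_adjoint U1 * U1 = 1\<^sub>m r" and vv: "mat_adjoint V1 * V1 = 1\<^sub>m r"
    and SSi: "S * Si = 1\<^sub>m r" and SiS: "Si * S = 1\<^sub>m r"
    and A: "A = U1 * S * mat_adjoint V1"
  shows "penrose A (V1 * (Si * mat_adjoint U1))"
    and "A * (V1 * (Si * mat_adjoint U1)) = U1 * mat_adjoint U1"
    and "(V1 * (Si * mat_adjoint U1)) * A = V1 * mat_adjoint V1"
proof -
  define X where "X = V1 * (Si * mat_adjoint U1)"
  define W where "W = U1 * S"
  define Z where "Z = Si * mat_adjoint U1"
  have aU1: "mat_adjoint U1 \<in> carrier_mat r m" using U1 by simp
  have aV1: "mat_adjoint V1 \<in> carrier_mat r n" using V1 by simp
  have Wc: "W \<in> carrier_mat m r" unfolding W_def using U1 S by simp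
  have Zc: "Z \<in> carrier_mat r m" unfolding Z_def using Si aU1 by simp
  have Ac: "A \<in> carrier_mat m n" unfolding A using U1 S aV1 by simp
  have Xc: "X \<in> carrier_mat n m" unfolding X_def using V1 Si aU1 by simp
  have SaV: "S * mat_adjoint V1 \<in> carrier_mat r n" using S aV1 by simp
  have AW: "A = W * mat_adjoint V1" unfolding A W_def ..
  have A': "A = U1 * (S * mat_adjoint V1)" unfolding A by (rule assoc_mult_mat[OF U1 S aV1])
  have X': "X = V1 * Z" unfolding X_def Z_def ..
  have AX: "A * X = U1 * mat_adjoint U1"
  proof -
    have "A * X = W * ((mat_adjoint V1 * V1) * Z)" unfolding AW X' by (rule assoc4[OF Wc aV1 V1 Zc])
    also have "\<dots> = W * Z" using vv left_mult_one_mat[OF Zc] by simp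
    also have "\<dots> = U1 * ((S * Si) * mat_adjoint U1)" unfolding W_def Z_def by (rule assoc4[OF U1 S Si aU1])
    also have "\<dots> = U1 * mat_adjoint U1" using SSi left_mult_one_mat[OF aU1] by simp
    finally show ?thesis .
  qed
  have XA: "X * A = V1 * mat_adjoint V1"
  proof -
    have ZW: "Z * W = 1\<^sub>m r"
    proof -
      have "Z * W = Si * ((mat_adjoint U1 * U1) * S)" unfolding Z_def W_def by (rule assoc4[OF Si aU1 U1 S])
      also have "\<dots> = 1\<^sub>m r" using uu SiS left_mult_one_mat[OF S] by simp
      finally show ?thesis .
    qed
    have "X * A = V1 * ((Z * W) * mat_adjoint V1)" unfolding AW X' by (rule assoc4[OF V1 Zc Wc aV1])
    also have "\<dots> = V1 * mat_adjoint V1" using ZW left_mult_one_mat[OF aV1] by simp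
    finally show ?thesis .
  qed
  have P1: "A * X * A = A"
  proof -
    have "A * X * A = (U1 * mat_adjoint U1) * (U1 * (S * mat_adjoint V1))" unfolding AX using A' by simp
    also have "\<dots> = U1 * ((mat_adjoint U1 * U1) * (S * mat_adjoint V1))" by (rule assoc4[OF U1 aU1 U1 SaV])
    also have "\<dots> = A" using uu left_mult_one_mat[OF SaV] A' by simp
    finally show ?thesis .
  qed
  have P2: "X * A * X = X"
  proof -
    have "X * A * X = (V1 * mat_adjoint V1) * (V1 * Z)" unfolding XA using X' by simp
    also have "\<dots> = V1 * ((mat_adjoint V1 * V1) * Z)" by (rule assoc4[OF V1 aV1 V1 Zc])
    also have "\<dots> = X" using vv left_mult_one_mat[OF Zc] X' by simp
    finally show ?thesis .
  qed
  have P3: "mat_adjoint (A * X) = A * X" unfolding AX using adj_mult[OF U1 aU1] by simp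
  have P4: "mat_adjoint (X * A) = X * A" unfolding XA using adj_mult[OF V1 aV1] by simp
  show "penrose A (V1 * (Si * mat_adjoint U1))" unfolding X_def[symmetric] penrose_def
    using Xc Ac P1 P2 P3 P4 by (simp add: carrier_matD)
  show "A * (V1 * (Si * mat_adjoint U1)) = U1 * mat_adjoint U1" using AX unfolding X_def .
  show "(V1 * (Si * mat_adjoint U1)) * A = V1 * mat_adjoint V1" using XA unfolding X_def .
qed

lemma ip_iso:
  assumes P: "P \<in> carrier_mat a k" and pp: "mat_adjoint P * P = 1\<^sub>m k"
    and M: "M \<in> carrier_mat k l" and Q: "Q \<in> carrier_mat b l" and qq: "mat_adjoint Q * Q = 1\<^sub>m l"
  shows "ip (P * (M * mat_adjoint Q)) (P * (M * mat_adjoint Q)) = ip M M"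
proof -
  have aP: "mat_adjoint P \<in> carrier_mat k a" using P by simp
  have aQ: "mat_adjoint Q \<in> carrier_mat l b" using Q by simp
  have N: "M * mat_adjoint Q \<in> carrier_mat k b" using M aQ by simp
  have PN: "P * (M * mat_adjoint Q) \<in> carrier_mat a b" using P N by simp
  have "ip (P * (M * mat_adjoint Q)) (P * (M * mat_adjoint Q))
      = ip (mat_adjoint P * (P * (M * mat_adjoint Q))) (M * mat_adjoint Q)"
    by (rule ip_left_mult[OF P N PN])
  also have "mat_adjoint P * (P * (M * mat_adjoint Q)) = (mat_adjoint P * P) * (M * mat_adjoint Q)"
    by (rule assoc_mult_mat[OF aP P N, symmetric])
  also have "\<dots> = M * mat_adjoint Q" using pp left_mult_one_mat[OF N] by simp
  also have "ip (M * mat_adjoint Q) (M * mat_adjoint Q) = ip M ((M * mat_adjoint Q) * mat_adjoint (mat_adjoint Q))"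
    by (rule ip_right_mult[OF M aQ N])
  also have "(M * mat_adjoint Q) * mat_adjoint (mat_adjoint Q) = M * (mat_adjoint Q * Q)"
    using assoc_mult_mat[OF M aQ Q] by simp
  also have "\<dots> = M" using qq right_mult_one_mat[OF M] by simp
  finally show ?thesis .
qed

lemma ip_neg:
  assumes M: "M \<in> carrier_mat a b" and N: "N \<in> carrier_mat a b"
    and e: "\<And>i j. i < a \<Longrightarrow> j < b \<Longrightarrow> N $$ (i,j) = - M $$ (i,j)"
  shows "ip N N = ip M M"
  unfolding ip_def carrier_matD[OF M] carrier_matD[OF N]
  by (intro sum.cong refl) (simp add: e)


lemma adj_diag_real: "mat_adjoint (mat_diag r (\<lambda>i. complex_of_real (d i))) = mat_diag r (\<lambda>i. complex_of_real (d i))"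
  by (rule eq_matI) (simp_all add: mat_diag_def)

lemma unitaryD: assumes "U \<in> carrier_mat m m" "unitary_mat U"
  shows "mat_adjoint U * U = 1\<^sub>m m" "U * mat_adjoint U = 1\<^sub>m m"
  using assms unfolding unitary_mat_def by (simp_all add: carrier_matD)

lemma term_a:
  assumes P: "P \<in> carrier_mat n s" and pp: "mat_adjoint P * P = 1\<^sub>m s"
    and Z: "Z \<in> carrier_mat s m" and Q: "Q \<in> carrier_mat m k" and qq: "mat_adjoint Q * Q = 1\<^sub>m k"
  shows "ip ((P * Z) * (Q * mat_adjoint Q)) ((P * Z) * (Q * mat_adjoint Q)) = ip (Z * Q) (Z * Q)"
proof -
  have aQ: "mat_adjoint Q \<in> carrier_mat k m" using Q by simp
  have ZQ: "Z * Q \<in> carrier_mat s k" using Z Q by simp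
  have eq: "(P * Z) * (Q * mat_adjoint Q) = P * ((Z * Q) * mat_adjoint Q)" by (rule assoc4[OF P Z Q aQ])
  show ?thesis unfolding eq by (rule ip_iso[OF P pp ZQ Q qq])
qed

lemma term_b:
  assumes P: "P \<in> carrier_mat n k" and pp: "mat_adjoint P * P = 1\<^sub>m k"
    and V: "V \<in> carrier_mat n r" and Si: "Si \<in> carrier_mat r r"
    and U: "U \<in> carrier_mat m r" and uu: "mat_adjoint U * U = 1\<^sub>m r"
  shows "ip ((P * mat_adjoint P) * (V * (Si * mat_adjoint U))) ((P * mat_adjoint P) * (V * (Si * mat_adjoint U)))
     = ip (mat_adjoint P * V * Si) (mat_adjoint P * V * Si)"
proof -
  have aP: "mat_adjoint P \<in> carrier_mat k n" using P by simp
  have aU: "mat_adjoint U \<in> carrier_mat r m" using U by simp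
  have SU: "Si * mat_adjoint U \<in> carrier_mat r m" using Si aU by simp
  have PV: "mat_adjoint P * V \<in> carrier_mat k r" using aP V by simp
  have M: "mat_adjoint P * V * Si \<in> carrier_mat k r" using PV Si by simp
  have "(P * mat_adjoint P) * (V * (Si * mat_adjoint U)) = P * ((mat_adjoint P * V) * (Si * mat_adjoint U))"
    by (rule assoc4[OF P aP V SU])
  also have "(mat_adjoint P * V) * (Si * mat_adjoint U) = (mat_adjoint P * V * Si) * mat_adjoint U"
    by (rule assoc_mult_mat[OF PV Si aU, symmetric])
  finally have eq: "(P * mat_adjoint P) * (V * (Si * mat_adjoint U)) = P * ((mat_adjoint P * V * Si) * mat_adjoint U)" .
  show ?thesis unfolding eq by (rule ip_iso[OF P pp M U uu])
qed

lemma neg_prod: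
  assumes A: "A \<in> carrier_mat m n" and B: "B \<in> carrier_mat m n"
    and X: "X \<in> carrier_mat n m" and Y: "Y \<in> carrier_mat n m"
  shows "ip (X * (A - B) * Y) (X * (A - B) * Y) = ip (X * (B - A) * Y) (X * (B - A) * Y)"
proof -
  have XA: "X * A \<in> carrier_mat n n" using X A by simp
  have XB: "X * B \<in> carrier_mat n n" using X B by simp
  have e1: "X * (A - B) * Y = X * A * Y - X * B * Y"
    using mult_minus_distrib_mat[OF X A B] minus_mult_distrib_mat[OF XA XB Y] by simp
  have e2: "X * (B - A) * Y = X * B * Y - X * A * Y"
    using mult_minus_distrib_mat[OF X B A] minus_mult_distrib_mat[OF XB XA Y] by simp
  have c1: "X * (A - B) * Y \<in> carrier_mat n m" unfolding e1 using XB Y by (intro minus_carrier_mat) simp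
  have c2: "X * (B - A) * Y \<in> carrier_mat n m" unfolding e2 using XA Y by (intro minus_carrier_mat) simp
  show ?thesis
  proof (rule ip_neg[OF c2 c1])
    fix i j assume "i < n" "j < m"
    thus "(X * (A - B) * Y) $$ (i, j) = - (X * (B - A) * Y) $$ (i, j)"
      unfolding e1 e2 using carrier_matD[OF X] carrier_matD[OF Y] by simp
  qed
qed

lemma neg_diff:
  assumes X: "X \<in> carrier_mat n m" and Y: "Y \<in> carrier_mat n m"
  shows "ip (X - Y) (X - Y) = ip (Y - X) (Y - X)"
proof (rule ip_neg[OF minus_carrier_mat[OF X] minus_carrier_mat[OF Y]])
  fix i j assume "i < n" "j < m"
  thus "(X - Y) $$ (i, j) = - (Y - X) $$ (i, j)"
    using carrier_matD[OF X] carrier_matD[OF Y] by simp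
qed

theorem lemma2p2:
  fixes m n r s :: nat
    and A B U V Ut Vt :: "complex mat"
    and \<sigma> \<sigma>t :: "nat \<Rightarrow> real"
  assumes A: "A \<in> carrier_mat m n" and B: "B \<in> carrier_mat m n"
    and rkA: "vec_space.rank m A = r"
    and rkB: "vec_space.rank m B = s"
    and r_le: "r \<le> m" "r \<le> n" and s_le: "s \<le> m" "s \<le> n"
    and U: "U \<in> carrier_mat m m" "unitary_mat U"
    and V: "V \<in> carrier_mat n n" "unitary_mat V"
    and Ut: "Ut \<in> carrier_mat m m" "unitary_mat Ut"
    and Vt: "Vt \<in> carrier_mat n n" "unitary_mat Vt"
    and \<sigma>_mono: "\<And>i j. i \<le> j \<Longrightarrow> j < r \<Longrightarrow> \<sigma> j \<le> \<sigma> i"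
    and \<sigma>_pos: "\<And>i. i < r \<Longrightarrow> \<sigma> i > 0"
    and \<sigma>t_mono: "\<And>i j. i \<le> j \<Longrightarrow> j < s \<Longrightarrow> \<sigma>t j \<le> \<sigma>t i"
    and \<sigma>t_pos: "\<And>i. i < s \<Longrightarrow> \<sigma>t i > 0"
    and svdA: "A = U * four_block_mat (mat_diag r (\<lambda>i. complex_of_real (\<sigma> i)))
                      (0\<^sub>m r (n - r)) (0\<^sub>m (m - r) r) (0\<^sub>m (m - r) (n - r)) * mat_adjoint V"
    and svdA1: "A = col_block U 0 r * mat_diag r (\<lambda>i. complex_of_real (\<sigma> i))
                      * mat_adjoint (col_block V 0 r)"
    and svdB: "B = Ut * four_block_mat (mat_diag s (\<lambda>i. complex_of_real (\<sigma>t i)))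
                      (0\<^sub>m s (n - s)) (0\<^sub>m (m - s) s) (0\<^sub>m (m - s) (n - s)) * mat_adjoint Vt"
    and svdB1: "B = col_block Ut 0 s * mat_diag s (\<lambda>i. complex_of_real (\<sigma>t i))
                      * mat_adjoint (col_block Vt 0 s)"
  shows
   "let U1 = col_block U 0 r; U2 = col_block U r (m - r);
        V1 = col_block V 0 r; V2 = col_block V r (n - r);
        Ut1 = col_block Ut 0 s; Ut2 = col_block Ut s (m - s);
        Vt1 = col_block Vt 0 s; Vt2 = col_block Vt s (n - s);
        \<Sigma>1 = mat_diag r (\<lambda>i. complex_of_real (\<sigma> i));
        \<Sigma>t1 = mat_diag s (\<lambda>i. complex_of_real (\<sigma>t i));
        E = B - A
    in (frob_norm (mp_inverse B - mp_inverse A))\<^sup>2 =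
         (frob_norm (mat_inv \<Sigma>t1 * mat_adjoint Ut1 * U2))\<^sup>2
       + (frob_norm (mat_adjoint Vt2 * V1 * mat_inv \<Sigma>1))\<^sup>2
       + (frob_norm (mp_inverse B * E * mp_inverse A))\<^sup>2
     \<and> (frob_norm (mp_inverse B - mp_inverse A))\<^sup>2 =
         (frob_norm (mat_adjoint Ut2 * U1 * mat_inv \<Sigma>1))\<^sup>2
       + (frob_norm (mat_inv \<Sigma>t1 * mat_adjoint Vt1 * V2))\<^sup>2
       + (frob_norm (mp_inverse A * E * mp_inverse B))\<^sup>2"
proof -
  define U1 where "U1 = col_block U 0 r"
  define U2 where "U2 = col_block U r (m - r)"
  define V1 where "V1 = col_block V 0 r"
  define V2 where "V2 = col_block V r (n - r)"
  define Ut1 where "Ut1 = col_block Ut 0 s"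
  define Ut2 where "Ut2 = col_block Ut s (m - s)"
  define Vt1 where "Vt1 = col_block Vt 0 s"
  define Vt2 where "Vt2 = col_block Vt s (n - s)"
  define S where "S = mat_diag r (\<lambda>i. complex_of_real (\<sigma> i))"
  define St where "St = mat_diag s (\<lambda>i. complex_of_real (\<sigma>t i))"
  define Si where "Si = mat_diag r (\<lambda>i. complex_of_real (1 / \<sigma> i))"
  define Sti where "Sti = mat_diag s (\<lambda>i. complex_of_real (1 / \<sigma>t i))"
  have Sne: "\<And>i. i < r \<Longrightarrow> \<sigma> i \<noteq> 0" using \<sigma>_pos by (metis less_irrefl)
  have Stne: "\<And>i. i < s \<Longrightarrow> \<sigma>t i \<noteq> 0" using \<sigma>t_pos by (metis less_irrefl)
  have invS: "mat_inv S = Si" and SSi: "S * Si = 1\<^sub>m r" and SiS: "Si * S = 1\<^sub>m r"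
    unfolding S_def Si_def using mat_inv_diag[of r \<sigma>, OF Sne] by blast+
  have invSt: "mat_inv St = Sti" and StSti: "St * Sti = 1\<^sub>m s" and StiSt: "Sti * St = 1\<^sub>m s"
    unfolding St_def Sti_def using mat_inv_diag[of s \<sigma>t, OF Stne] by blast+
  have Sc: "S \<in> carrier_mat r r" "Si \<in> carrier_mat r r" unfolding S_def Si_def by simp_all
  have Stc: "St \<in> carrier_mat s s" "Sti \<in> carrier_mat s s" unfolding St_def Sti_def by simp_all
  have aSi: "mat_adjoint Si = Si" unfolding Si_def by (rule adj_diag_real)
  have aSti: "mat_adjoint Sti = Sti" unfolding Sti_def by (rule adj_diag_real)
  note uU = unitaryD[OF U] and uV = unitaryD[OF V] and uUt = unitaryD[OF Ut] and uVt = unitaryD[OF Vt]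
  have U1c: "U1 \<in> carrier_mat m r" unfolding U1_def by (rule cb_carrier[OF U(1)])
  have U2c: "U2 \<in> carrier_mat m (m - r)" unfolding U2_def by (rule cb_carrier[OF U(1)])
  have V1c: "V1 \<in> carrier_mat n r" unfolding V1_def by (rule cb_carrier[OF V(1)])
  have V2c: "V2 \<in> carrier_mat n (n - r)" unfolding V2_def by (rule cb_carrier[OF V(1)])
  have Ut1c: "Ut1 \<in> carrier_mat m s" unfolding Ut1_def by (rule cb_carrier[OF Ut(1)])
  have Ut2c: "Ut2 \<in> carrier_mat m (m - s)" unfolding Ut2_def by (rule cb_carrier[OF Ut(1)])
  have Vt1c: "Vt1 \<in> carrier_mat n s" unfolding Vt1_def by (rule cb_carrier[OF Vt(1)])
  have Vt2c: "Vt2 \<in> carrier_mat n (n - s)" unfolding Vt2_def by (rule cb_carrier[OF Vt(1)])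
  have oU1: "mat_adjoint U1 * U1 = 1\<^sub>m r" unfolding U1_def using r_le by (intro cb_orth[OF U(1) uU(1)]) simp
  have oU2: "mat_adjoint U2 * U2 = 1\<^sub>m (m - r)" unfolding U2_def using r_le by (intro cb_orth[OF U(1) uU(1)]) simp
  have oV1: "mat_adjoint V1 * V1 = 1\<^sub>m r" unfolding V1_def using r_le by (intro cb_orth[OF V(1) uV(1)]) simp
  have oV2: "mat_adjoint V2 * V2 = 1\<^sub>m (n - r)" unfolding V2_def using r_le by (intro cb_orth[OF V(1) uV(1)]) simp
  have oUt1: "mat_adjoint Ut1 * Ut1 = 1\<^sub>m s" unfolding Ut1_def using s_le by (intro cb_orth[OF Ut(1) uUt(1)]) simp
  have oUt2: "mat_adjoint Ut2 * Ut2 = 1\<^sub>m (m - s)" unfolding Ut2_def using s_le by (intro cb_orth[OF Ut(1) uUt(1)]) simp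
  have oVt1: "mat_adjoint Vt1 * Vt1 = 1\<^sub>m s" unfolding Vt1_def using s_le by (intro cb_orth[OF Vt(1) uVt(1)]) simp
  have oVt2: "mat_adjoint Vt2 * Vt2 = 1\<^sub>m (n - s)" unfolding Vt2_def using s_le by (intro cb_orth[OF Vt(1) uVt(1)]) simp
  have sU: "1\<^sub>m m - U1 * mat_adjoint U1 = U2 * mat_adjoint U2"
    unfolding U1_def U2_def using r_le by (intro cb_split[OF U(1) uU(2)])
  have sV: "1\<^sub>m n - V1 * mat_adjoint V1 = V2 * mat_adjoint V2"
    unfolding V1_def V2_def using r_le by (intro cb_split[OF V(1) uV(2)])
  have sUt: "1\<^sub>m m - Ut1 * mat_adjoint Ut1 = Ut2 * mat_adjoint Ut2"
    unfolding Ut1_def Ut2_def using s_le by (intro cb_split[OF Ut(1) uUt(2)])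
  have sVt: "1\<^sub>m n - Vt1 * mat_adjoint Vt1 = Vt2 * mat_adjoint Vt2"
    unfolding Vt1_def Vt2_def using s_le by (intro cb_split[OF Vt(1) uVt(2)])
  define XA where "XA = V1 * (Si * mat_adjoint U1)"
  define XB where "XB = Vt1 * (Sti * mat_adjoint Ut1)"
  have A1: "A = U1 * S * mat_adjoint V1" using svdA1 unfolding U1_def S_def V1_def .
  have B1: "B = Ut1 * St * mat_adjoint Vt1" using svdB1 unfolding Ut1_def St_def Vt1_def .
  note pA = svd_pen[OF U1c V1c Sc(1) Sc(2) oU1 oV1 SSi SiS A1, folded XA_def]
  note pB = svd_pen[OF Ut1c Vt1c Stc(1) Stc(2) oUt1 oVt1 StSti StiSt B1, folded XB_def]
  have mpA: "mp_inverse A = XA" by (rule mp_inverse_eq[OF A pA(1)])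
  have mpB: "mp_inverse B = XB" by (rule mp_inverse_eq[OF B pB(1)])
  have XAc: "XA \<in> carrier_mat n m" using pA(1) A unfolding penrose_def by (simp add: carrier_matD)
  have XBc: "XB \<in> carrier_mat n m" using pB(1) B unfolding penrose_def by (simp add: carrier_matD)
  have c1: "ip (XB - XA) (XB - XA) =
     ip (XB * (1\<^sub>m m - A * XA)) (XB * (1\<^sub>m m - A * XA))
   + ip ((1\<^sub>m n - XB * B) * XA) ((1\<^sub>m n - XB * B) * XA)
   + ip (XB * (B - A) * XA) (XB * (B - A) * XA)" by (rule core[OF A B pA(1) pB(1)])
  have c2: "ip (XA - XB) (XA - XB) =
     ip (XA * (1\<^sub>m m - B * XB)) (XA * (1\<^sub>m m - B * XB))
   + ip ((1\<^sub>m n - XA * A) * XB) ((1\<^sub>m n - XA * A) * XB)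
   + ip (XA * (A - B) * XB) (XA * (A - B) * XB)" by (rule core[OF B A pB(1) pA(1)])
  have aUt1: "mat_adjoint Ut1 \<in> carrier_mat s m" using Ut1c by simp
  have aU1: "mat_adjoint U1 \<in> carrier_mat r m" using U1c by simp
  have t1: "ip (XB * (1\<^sub>m m - A * XA)) (XB * (1\<^sub>m m - A * XA)) = ip (Sti * mat_adjoint Ut1 * U2) (Sti * mat_adjoint Ut1 * U2)"
    unfolding pA(2) sU XB_def
    by (rule term_a[OF Vt1c oVt1 _ U2c oU2]) (use Stc aUt1 in simp)
  have t2: "ip ((1\<^sub>m n - XB * B) * XA) ((1\<^sub>m n - XB * B) * XA) = ip (mat_adjoint Vt2 * V1 * Si) (mat_adjoint Vt2 * V1 * Si)"
    unfolding pB(3) sVt XA_def by (rule term_b[OF Vt2c oVt2 V1c Sc(2) U1c oU1])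
  have t3: "ip (XA * (1\<^sub>m m - B * XB)) (XA * (1\<^sub>m m - B * XB)) = ip (Si * mat_adjoint U1 * Ut2) (Si * mat_adjoint U1 * Ut2)"
    unfolding pB(2) sUt XA_def
    by (rule term_a[OF V1c oV1 _ Ut2c oUt2]) (use Sc aU1 in simp)
  have t4: "ip ((1\<^sub>m n - XA * A) * XB) ((1\<^sub>m n - XA * A) * XB) = ip (mat_adjoint V2 * Vt1 * Sti) (mat_adjoint V2 * Vt1 * Sti)"
    unfolding pA(3) sV XB_def by (rule term_b[OF V2c oV2 Vt1c Stc(2) Ut1c oUt1])
  have adj3: "mat_adjoint (Si * mat_adjoint U1 * Ut2) = mat_adjoint Ut2 * U1 * Si"
  proof -
    have SiU: "Si * mat_adjoint U1 \<in> carrier_mat r m" using Sc aU1 by simp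
    have "mat_adjoint (Si * mat_adjoint U1 * Ut2) = mat_adjoint Ut2 * mat_adjoint (Si * mat_adjoint U1)"
      by (rule adj_mult[OF SiU Ut2c])
    also have "mat_adjoint (Si * mat_adjoint U1) = U1 * Si"
      using adj_mult[OF Sc(2) aU1] aSi by simp
    also have "mat_adjoint Ut2 * (U1 * Si) = mat_adjoint Ut2 * U1 * Si"
      by (rule assoc_mult_mat[OF adj_carrier[OF Ut2c] U1c Sc(2), symmetric])
    finally show ?thesis .
  qed
  have adj4: "mat_adjoint (mat_adjoint V2 * Vt1 * Sti) = Sti * mat_adjoint Vt1 * V2"
  proof -
    have aV2: "mat_adjoint V2 \<in> carrier_mat (n - r) n" using V2c by simp
    have VV: "mat_adjoint V2 * Vt1 \<in> carrier_mat (n - r) s" using aV2 Vt1c by simp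
    have "mat_adjoint (mat_adjoint V2 * Vt1 * Sti) = Sti * mat_adjoint (mat_adjoint V2 * Vt1)"
      using adj_mult[OF VV Stc(2)] aSti by simp
    also have "mat_adjoint (mat_adjoint V2 * Vt1) = mat_adjoint Vt1 * V2"
      using adj_mult[OF aV2 Vt1c] by simp
    also have "Sti * (mat_adjoint Vt1 * V2) = Sti * mat_adjoint Vt1 * V2"
      by (rule assoc_mult_mat[OF Stc(2) adj_carrier[OF Vt1c] V2c, symmetric])
    finally show ?thesis .
  qed
  have t3': "ip (mat_adjoint Ut2 * U1 * Si) (mat_adjoint Ut2 * U1 * Si) = ip (Si * mat_adjoint U1 * Ut2) (Si * mat_adjoint U1 * Ut2)"
    using ip_adj[of "Si * mat_adjoint U1 * Ut2"] unfolding adj3 .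
  have t4': "ip (Sti * mat_adjoint Vt1 * V2) (Sti * mat_adjoint Vt1 * V2) = ip (mat_adjoint V2 * Vt1 * Sti) (mat_adjoint V2 * Vt1 * Sti)"
    using ip_adj[of "mat_adjoint V2 * Vt1 * Sti"] unfolding adj4 .
  have t5: "ip (XA * (A - B) * XB) (XA * (A - B) * XB) = ip (XA * (B - A) * XB) (XA * (B - A) * XB)"
    by (rule neg_prod[OF A B XAc XBc])
  have t6: "ip (XA - XB) (XA - XB) = ip (XB - XA) (XB - XA)"
    by (rule neg_diff[OF XAc XBc])
  have r1: "Re (ip (XB - XA) (XB - XA)) = Re (ip (Sti * mat_adjoint Ut1 * U2) (Sti * mat_adjoint Ut1 * U2))
     + Re (ip (mat_adjoint Vt2 * V1 * Si) (mat_adjoint Vt2 * V1 * Si)) + Re (ip (XB * (B - A) * XA) (XB * (B - A) * XA))"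
    using c1 t1 t2 by simp
  have r2: "Re (ip (XB - XA) (XB - XA)) = Re (ip (mat_adjoint Ut2 * U1 * Si) (mat_adjoint Ut2 * U1 * Si))
     + Re (ip (Sti * mat_adjoint Vt1 * V2) (Sti * mat_adjoint Vt1 * V2)) + Re (ip (XA * (B - A) * XB) (XA * (B - A) * XB))"
    using c2 t3 t4 t3' t4' t5 t6 by simp
  show ?thesis
    unfolding Let_def U1_def[symmetric] U2_def[symmetric] V1_def[symmetric] V2_def[symmetric]
      Ut1_def[symmetric] Ut2_def[symmetric] Vt1_def[symmetric] Vt2_def[symmetric]
      S_def[symmetric] St_def[symmetric] invS invSt mpA mpB fro_sq
    using r1 r2 by simp
qed

end
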